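(* Let $t\geq 5$ and let $H_t$ be the graph with vertices $u,v,w,b,a_1,\dots,a_{t-3}$ and edges $ua_i$ and $a_iv$ for $i=1,\dots,t-3$, edges $ub$ and $bw$, and two parallel edges joining $v$ and $w$. Then $L(H_t)$ has a $K_t$-minor but no $K_t$-immersion.
   Context: Graphs are finite and may have parallel edges but no loops. $L(H)$ is the simple graph with vertex set $E(H)$ in which two distinct edges of $H$ are adjacent iff they share at least one endpoint. A graph $G$ has a $K_t$-immersion if there is an injective map $\phi$ from the vertex set of $K_t$ to $V(G)$ and, for each pair $u\neq v$ of vertices of $K_t$, a path in $G$ joining $\phi(u)$ and $\phi(v)$, such that these paths are pairwise edge-disjoint. $G$ has a $K_t$-minor if $K_t$ can be obtained from a subgraph of $G$ by contracting edges. *)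

theory Defs
  imports Main
begin

section \<open>Simple graphs: vertex set V and edge set E of 2-element subsets\<close>

definition is_path :: "'a set \<Rightarrow> 'a set set \<Rightarrow> 'a list \<Rightarrow> bool" where
  "is_path V E p \<longleftrightarrow> p \<noteq> [] \<and> distinct p \<and> set p \<subseteq> V \<and>
     (\<forall>i. Suc i < length p \<longrightarrow> {p ! i, p ! Suc i} \<in> E)"

definition path_edges :: "'a list \<Rightarrow> 'a set set" where
  "path_edges p = {{p ! i, p ! Suc i} | i. Suc i < length p}"

definition has_K_immersion :: "'a set \<Rightarrow> 'a set set \<Rightarrow> nat \<Rightarrow> bool" where
  "has_K_immersion V E t \<longleftrightarrow> (\<exists>(\<phi>::nat \<Rightarrow> 'a) (P::nat \<Rightarrow> nat \<Rightarrow> 'a list).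
     inj_on \<phi> {..<t} \<and> \<phi> ` {..<t} \<subseteq> V \<and>
     (\<forall>i j. i < j \<and> j < t \<longrightarrow>
        is_path V E (P i j) \<and> hd (P i j) = \<phi> i \<and> last (P i j) = \<phi> j) \<and>
     (\<forall>i j k l. i < j \<and> j < t \<and> k < l \<and> l < t \<and> (i, j) \<noteq> (k, l) \<longrightarrow>
        path_edges (P i j) \<inter> path_edges (P k l) = {}))"

text \<open>Contraction of the edge {x,y}: y is merged into x (parallel edges merge, the edge
  {x,y} itself disappears, so the result is again simple).\<close>
definition contract :: "'a set \<Rightarrow> 'a set set \<Rightarrow> 'a \<Rightarrow> 'a \<Rightarrow> 'a set \<times> 'a set set" where
  "contract V E x y = (V - {y},
     {(\<lambda>z. if z = y then x else z) ` e | e. e \<in> E \<and> e \<noteq> {x, y}})"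

inductive contracts :: "'a set \<Rightarrow> 'a set set \<Rightarrow> 'a set \<Rightarrow> 'a set set \<Rightarrow> bool" where
  refl: "contracts V E V E"
| step: "\<lbrakk>{x, y} \<in> E; x \<noteq> y; contract V E x y = (V', E'); contracts V' E' V'' E''\<rbrakk>
          \<Longrightarrow> contracts V E V'' E''"

definition is_complete_on :: "'a set \<Rightarrow> 'a set set \<Rightarrow> nat \<Rightarrow> bool" where
  "is_complete_on V E t \<longleftrightarrow> finite V \<and> card V = t \<and>
     E = {{x, y} | x y. x \<in> V \<and> y \<in> V \<and> x \<noteq> y}"

definition has_K_minor :: "'a set \<Rightarrow> 'a set set \<Rightarrow> nat \<Rightarrow> bool" where
  "has_K_minor V E t \<longleftrightarrow> (\<exists>V1 E1 V2 E2. V1 \<subseteq> V \<and> E1 \<subseteq> E \<and> (\<forall>e\<in>E1. e \<subseteq> V1) \<and>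
     contracts V1 E1 V2 E2 \<and> is_complete_on V2 E2 t)"

section \<open>Line graph of a multigraph given by an edge set and an endpoint map\<close>

definition line_graph_E :: "'e set \<Rightarrow> ('e \<Rightarrow> 'v set) \<Rightarrow> 'e set set" where
  "line_graph_E Ed ends = {{e, f} | e f. e \<in> Ed \<and> f \<in> Ed \<and> e \<noteq> f \<and> ends e \<inter> ends f \<noteq> {}}"

datatype hvert = U | Vv | W | B | A nat

datatype hedge = UA nat | AV nat | UB | BW | VW1 | VW2

fun H_ends :: "hedge \<Rightarrow> hvert set" where
  "H_ends (UA i) = {U, A i}"
| "H_ends (AV i) = {A i, Vv}"
| "H_ends UB = {U, B}"
| "H_ends BW = {B, W}"
| "H_ends VW1 = {Vv, W}"
| "H_ends VW2 = {Vv, W}"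

definition H_edges :: "nat \<Rightarrow> hedge set" where
  "H_edges t = UA ` {1..t-3} \<union> AV ` {1..t-3} \<union> {UB, BW, VW1, VW2}"

end

theory Submission
  imports Defs
begin


lemma contracts_star:
  assumes "finite Y" "x \<notin> Y" "\<forall>y\<in>Y. {x,y} \<in> E" "\<forall>e\<in>E. \<exists>a b. a \<noteq> b \<and> e = {a,b}"
  shows "contracts V E (V - Y) {(\<lambda>z. if z \<in> Y then x else z) ` e | e. e \<in> E \<and> (\<lambda>z. if z \<in> Y then x else z) ` e \<noteq> {x}}"
  using assms
proof (induction Y arbitrary: V E rule: finite_induct)
  case empty
  have "{(\<lambda>z. if z \<in> {} then x else z) ` e | e. e \<in> E \<and> (\<lambda>z. if z \<in> {} then x else z) ` e \<noteq> {x}} = E"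
  proof -
    have "\<forall>e\<in>E. e \<noteq> {x}"
    proof
      fix e assume "e \<in> E"
      then obtain a b where "a \<noteq> b" "e = {a,b}" using empty.prems(3) by blast
      then show "e \<noteq> {x}" by auto
    qed
    then show ?thesis by auto
  qed
  then show ?case by (simp add: contracts.refl)
next
  case (insert y Y0)
  define fy where "fy = (\<lambda>z. if z = y then x else z)"
  define Ey where "Ey = {fy ` e | e. e \<in> E \<and> e \<noteq> {x, y}}"
  have xy: "x \<noteq> y" using insert.prems(1) by auto
  have c: "contract V E x y = (V - {y}, Ey)" by (simp only: contract_def Ey_def fy_def)
  have h1: "\<forall>y'\<in>Y0. {x,y'} \<in> Ey"
  proof
    fix y' assume "y' \<in> Y0"
    have yy: "y' \<noteq> y" using \<open>y' \<in> Y0\<close> insert.hyps(2) by blast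
    have "{x,y'} \<in> E" using insert.prems(2) \<open>y' \<in> Y0\<close> by blast
    moreover have "{x,y'} \<noteq> {x,y}" using yy xy by (simp add: doubleton_eq_iff)
    moreover have "fy ` {x,y'} = {x,y'}" using yy xy by (simp add: fy_def)
    ultimately show "{x,y'} \<in> Ey" unfolding Ey_def by (metis (mono_tags, lifting) mem_Collect_eq)
  qed
  have h2: "\<forall>e\<in>Ey. \<exists>a b. a \<noteq> b \<and> e = {a,b}"
  proof
    fix e assume "e \<in> Ey"
    then obtain e0 where e0: "e0 \<in> E" "e0 \<noteq> {x,y}" "e = fy ` e0" unfolding Ey_def by auto
    then obtain a b where ab: "a \<noteq> b" "e0 = {a,b}" using insert.prems(3) by blast
    have "fy a \<noteq> fy b"
    proof (cases "a = y")
      case True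
      then have "b \<noteq> y" "b \<noteq> x" using ab e0(2) by (auto simp: insert_commute)
      then show ?thesis using True by (simp add: fy_def)
    next
      case False
      show ?thesis
      proof (cases "b = y")
        case True
        then have "a \<noteq> x" using ab e0(2) by auto
        then show ?thesis using True \<open>a \<noteq> y\<close> by (simp add: fy_def)
      next
        case False
        then show ?thesis using \<open>a \<noteq> y\<close> ab by (simp add: fy_def)
      qed
    qed
    moreover have "e = {fy a, fy b}" using e0(3) ab(2) by simp
    ultimately show "\<exists>a b. a \<noteq> b \<and> e = {a,b}" by blast
  qed
  have x0: "x \<notin> Y0" using insert.prems(1) by auto
  from insert.IH[OF x0 h1 h2, of "V - {y}"]
  have r: "contracts (V - {y}) Ey (V - {y} - Y0)
     {(\<lambda>z. if z \<in> Y0 then x else z) ` e | e. e \<in> Ey \<and> (\<lambda>z. if z \<in> Y0 then x else z) ` e \<noteq> {x}}" .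
  define f0 where "f0 = (\<lambda>z. if z \<in> Y0 then x else z)"
  define f where "f = (\<lambda>z. if z \<in> insert y Y0 then x else z)"
  have pw: "\<And>z. f0 (fy z) = f z" unfolding f0_def fy_def f_def using x0 by auto
  have comp: "\<And>e. f0 ` (fy ` e) = f ` e" by (simp add: image_image pw) 
  have eq: "{f0 ` e | e. e \<in> Ey \<and> f0 ` e \<noteq> {x}} = {f ` e | e. e \<in> E \<and> f ` e \<noteq> {x}}"
  proof (rule set_eqI, rule iffI)
    fix z assume "z \<in> {f0 ` e | e. e \<in> Ey \<and> f0 ` e \<noteq> {x}}"
    then obtain e where "e \<in> Ey" "f0 ` e \<noteq> {x}" "z = f0 ` e" by auto
    then obtain e0 where "e0 \<in> E" "e = fy ` e0" unfolding Ey_def by auto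
    moreover have "z = f ` e0" "f ` e0 \<noteq> {x}" using comp \<open>f0 ` e \<noteq> {x}\<close> \<open>z = f0 ` e\<close> \<open>e = fy ` e0\<close> by auto
    ultimately show "z \<in> {f ` e | e. e \<in> E \<and> f ` e \<noteq> {x}}" by blast
  next
    fix z assume "z \<in> {f ` e | e. e \<in> E \<and> f ` e \<noteq> {x}}"
    then obtain e where e: "e \<in> E" "f ` e \<noteq> {x}" "z = f ` e" by auto
    have "e \<noteq> {x,y}" using e(2) unfolding f_def by auto
    then have "fy ` e \<in> Ey" unfolding Ey_def using e by auto
    moreover have "f0 ` (fy ` e) = z" "f0 ` (fy ` e) \<noteq> {x}" using comp e by auto
    ultimately show "z \<in> {f0 ` e | e. e \<in> Ey \<and> f0 ` e \<noteq> {x}}" by blast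
  qed
  have "V - {y} - Y0 = V - insert y Y0" by auto
  then have r2: "contracts (V - {y}) Ey (V - insert y Y0) {f ` e | e. e \<in> E \<and> f ` e \<noteq> {x}}"
    using r eq unfolding f0_def by metis
  have "{x,y} \<in> E" using insert.prems(2) by auto
  from contracts.step[OF this xy c r2] show ?case unfolding f_def .
qed



lemma path_first:
  assumes "is_path V E p" "hd p \<noteq> last p"
  shows "{p!0, p!1} \<in> E \<and> {p!0, p!1} \<in> path_edges p \<and> hd p \<in> {p!0, p!1}"
proof -
  have ne: "p \<noteq> []" using assms(1) unfolding is_path_def by simp
  have "length p \<noteq> 1"
  proof
    assume "length p = 1"
    then obtain a where "p = [a]" by (cases p) auto
    then show False using assms(2) by simp
  qed
  then have l: "Suc 0 < length p" using ne by (cases p) auto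
  then have "{p!0, p!Suc 0} \<in> E" using assms(1) unfolding is_path_def by blast
  moreover have "{p!0, p!Suc 0} \<in> path_edges p" unfolding path_edges_def using l by blast
  moreover have "hd p = p!0" using ne by (simp add: hd_conv_nth)
  ultimately show ?thesis by simp
qed

lemma path_last:
  assumes "is_path V E p" "hd p \<noteq> last p"
  shows "{p!(length p - 2), p!(length p - 1)} \<in> E \<and> {p!(length p - 2), p!(length p - 1)} \<in> path_edges p
     \<and> last p \<in> {p!(length p - 2), p!(length p - 1)}"
proof -
  have ne: "p \<noteq> []" using assms(1) unfolding is_path_def by simp
  have "length p \<noteq> 1"
  proof
    assume "length p = 1"
    then obtain a where "p = [a]" by (cases p) auto
    then show False using assms(2) by simp
  qed
  then have l: "Suc 0 < length p" using ne by (cases p) auto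
  define i where "i = length p - 2"
  have si: "Suc i = length p - 1" "Suc i < length p" using l unfolding i_def by auto
  then have "{p!i, p!Suc i} \<in> E" using assms(1) unfolding is_path_def by blast
  moreover have "{p!i, p!Suc i} \<in> path_edges p" unfolding path_edges_def using si by blast
  moreover have "last p = p!(length p - 1)" using ne by (simp add: last_conv_nth)
  ultimately show ?thesis using si unfolding i_def by simp
qed

lemma imm_deg:
  assumes fin: "finite E" and inj: "inj_on \<phi> {..<t}"
    and paths: "\<forall>i j. i < j \<and> j < t \<longrightarrow> is_path V E (P i j) \<and> hd (P i j) = \<phi> i \<and> last (P i j) = \<phi> j"
    and disj: "\<forall>i j k l. i < j \<and> j < t \<and> k < l \<and> l < t \<and> (i, j) \<noteq> (k, l) \<longrightarrow>
        path_edges (P i j) \<inter> path_edges (P k l) = {}"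
    and k: "k < t"
  shows "t - 1 \<le> card {e\<in>E. \<phi> k \<in> e}"
proof -
  define prr where "prr j = (if k < j then (k, j) else (j, k))" for j
  define g where "g j = (let p = P (fst (prr j)) (snd (prr j)) in
      if k < j then {p!0, p!1} else {p!(length p - 2), p!(length p - 1)})" for j
  define J where "J = {..<t} - {k}"
  have pj: "g j \<in> E \<and> \<phi> k \<in> g j \<and> g j \<in> path_edges (P (fst (prr j)) (snd (prr j)))
      \<and> fst (prr j) < snd (prr j) \<and> snd (prr j) < t" if j: "j \<in> J" for j
  proof (cases "k < j")
    case True
    have jt: "j < t" using j unfolding J_def by auto
    have "\<phi> k \<noteq> \<phi> j" using inj k jt True by (metis inj_onD lessThan_iff less_irrefl)
    then have "is_path V E (P k j)" "hd (P k j) \<noteq> last (P k j)" "hd (P k j) = \<phi> k"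
      using paths True jt by auto
    from path_first[OF this(1,2)] this(3) show ?thesis
      using True jt unfolding g_def prr_def Let_def by simp
  next
    case False
    then have kj: "j < k" using j unfolding J_def by auto
    have "\<phi> k \<noteq> \<phi> j" using inj k kj by (metis inj_onD lessThan_iff less_irrefl order.strict_trans)
    then have "is_path V E (P j k)" "hd (P j k) \<noteq> last (P j k)" "last (P j k) = \<phi> k"
      using paths kj k by auto
    from path_last[OF this(1,2)] this(3) show ?thesis
      using False kj k unfolding g_def prr_def Let_def by simp
  qed
  have injg: "inj_on g J"
  proof (rule inj_onI)
    fix a b assume a: "a \<in> J" and b: "b \<in> J" and gab: "g a = g b"
    show "a = b"
    proof (rule ccontr)
      assume "a \<noteq> b"
      then have "prr a \<noteq> prr b" using a b unfolding prr_def J_def by auto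
      then have "path_edges (P (fst (prr a)) (snd (prr a))) \<inter> path_edges (P (fst (prr b)) (snd (prr b))) = {}"
        using disj pj[OF a] pj[OF b] by (metis prod.collapse)
      then show False using pj[OF a] pj[OF b] gab by auto
    qed
  qed
  have sub: "g ` J \<subseteq> {e\<in>E. \<phi> k \<in> e}" using pj by auto
  have cJ: "card J = t - 1" unfolding J_def using k by simp
  have "t - 1 = card (g ` J)" using card_image[OF injg] cJ by simp
  also have "\<dots> \<le> card {e\<in>E. \<phi> k \<in> e}" using sub fin by (intro card_mono) auto
  finally show ?thesis .
qed



lemma LG_mem: "{a,b} \<in> line_graph_E Ed ends \<longleftrightarrow> a \<in> Ed \<and> b \<in> Ed \<and> a \<noteq> b \<and> ends a \<inter> ends b \<noteq> {}"
  unfolding line_graph_E_def by (auto simp: doubleton_eq_iff)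

lemma LG_elem: "e \<in> line_graph_E Ed ends \<Longrightarrow> \<exists>a b. e = {a,b} \<and> a \<in> Ed \<and> b \<in> Ed \<and> a \<noteq> b \<and> ends a \<inter> ends b \<noteq> {}"
  unfolding line_graph_E_def by auto

lemma LG_finite: "finite Ed \<Longrightarrow> finite (line_graph_E Ed ends)"
  by (rule finite_subset[of _ "Pow Ed"]) (auto simp: line_graph_E_def)

lemma H_finite: "finite (H_edges t)"
  unfolding H_edges_def by auto

lemma card_nbr: "finite N \<Longrightarrow> {e \<in> E. v \<in> e} \<subseteq> (\<lambda>w. {v,w}) ` N \<Longrightarrow> card {e \<in> E. v \<in> e} \<le> card N"
  by (meson card_image_le card_mono finite_imageI order_trans)

lemma nbr:
  assumes "e \<in> line_graph_E Ed ends" "v \<in> e"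
  shows "\<exists>w. e = {v,w} \<and> w \<in> Ed \<and> w \<noteq> v \<and> ends v \<inter> ends w \<noteq> {}"
proof -
  obtain a b where ab: "e = {a,b}" "a \<in> Ed" "b \<in> Ed" "a \<noteq> b" "ends a \<inter> ends b \<noteq> {}"
    using LG_elem[OF assms(1)] by blast
  show ?thesis
  proof (cases "v = a")
    case True then show ?thesis using ab by blast
  next
    case False then have "v = b" using assms(2) ab(1) by auto
    then show ?thesis using ab by (auto simp: insert_commute)
  qed
qed


lemma deg_bound:
  assumes t: "t \<ge> 5" and v: "v \<in> H_edges t" "v \<notin> AV ` {1..t-3} \<union> {VW1, VW2}"
  shows "card {e \<in> line_graph_E (H_edges t) H_ends. v \<in> e} \<le> t - 2"
proof -
  let ?E = "line_graph_E (H_edges t) H_ends"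
  consider (ua) i where "v = UA i" "i \<in> {1..t-3}" | (ub) "v = UB" | (bw) "v = BW"
    using v unfolding H_edges_def by auto
  then show ?thesis
  proof cases
    case ua
    define N where "N = UA ` ({1..t-3} - {i}) \<union> {UB, AV i}"
    have sub: "{e \<in> ?E. v \<in> e} \<subseteq> (\<lambda>w. {v,w}) ` N"
    proof
      fix e assume "e \<in> {e \<in> ?E. v \<in> e}"
      then have "e \<in> ?E" "v \<in> e" by auto
      from nbr[OF this] obtain w where w: "e = {v,w}" "w \<in> H_edges t" "w \<noteq> v" "H_ends v \<inter> H_ends w \<noteq> {}"
        by blast
      have "w \<in> N" using w ua unfolding N_def H_edges_def by auto
      then show "e \<in> (\<lambda>w. {v,w}) ` N" using w(1) by blast
    qed
    have fN: "finite N" by (simp add: N_def)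
    have "card {e \<in> ?E. v \<in> e} \<le> card N" by (rule card_nbr[OF fN sub])
    also have "\<dots> \<le> card (UA ` ({1..t-3} - {i})) + card {UB, AV i}" unfolding N_def by (rule card_Un_le)
    also have "\<dots> \<le> (t - 3 - 1) + 2"
    proof -
      have "card (UA ` ({1..t-3} - {i})) \<le> card ({1..t-3} - {i})" by (rule card_image_le) auto
      also have "\<dots> = t - 3 - 1" using ua by simp
      finally show ?thesis by simp
    qed
    finally show ?thesis using t by simp
  next
    case ub
    define N where "N = UA ` {1..t-3} \<union> {BW}"
    have sub: "{e \<in> ?E. v \<in> e} \<subseteq> (\<lambda>w. {v,w}) ` N"
    proof
      fix e assume "e \<in> {e \<in> ?E. v \<in> e}"
      then have "e \<in> ?E" "v \<in> e" by auto
      from nbr[OF this] obtain w where w: "e = {v,w}" "w \<in> H_edges t" "w \<noteq> v" "H_ends v \<inter> H_ends w \<noteq> {}"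
        by blast
      have "w \<in> N" using w ub unfolding N_def H_edges_def by auto
      then show "e \<in> (\<lambda>w. {v,w}) ` N" using w(1) by blast
    qed
    have fN: "finite N" by (simp add: N_def)
    have "card {e \<in> ?E. v \<in> e} \<le> card N" by (rule card_nbr[OF fN sub])
    also have "\<dots> \<le> card (UA ` {1..t-3}) + card {BW}" unfolding N_def by (rule card_Un_le)
    also have "\<dots> \<le> (t - 3) + 1"
    proof -
      have "card (UA ` {1..t-3}) \<le> card {1..t-3}" by (rule card_image_le) auto
      then show ?thesis by simp
    qed
    finally show ?thesis using t by simp
  next
    case bw
    define N where "N = {UB, VW1, VW2}"
    have sub: "{e \<in> ?E. v \<in> e} \<subseteq> (\<lambda>w. {v,w}) ` N"
    proof
      fix e assume "e \<in> {e \<in> ?E. v \<in> e}"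
      then have "e \<in> ?E" "v \<in> e" by auto
      from nbr[OF this] obtain w where w: "e = {v,w}" "w \<in> H_edges t" "w \<noteq> v" "H_ends v \<inter> H_ends w \<noteq> {}"
        by blast
      have "w \<in> N" using w bw unfolding N_def H_edges_def by auto
      then show "e \<in> (\<lambda>w. {v,w}) ` N" using w(1) by blast
    qed
    have fN: "finite N" by (simp add: N_def)
    have "card {e \<in> ?E. v \<in> e} \<le> card N" by (rule card_nbr[OF fN sub])
    also have "\<dots> \<le> 3" unfolding N_def by (simp add: card_insert_if)
    finally show ?thesis using t by simp
  qed
qed


lemma no_imm:
  assumes t: "t \<ge> 5"
  shows "\<not> has_K_immersion (H_edges t) (line_graph_E (H_edges t) H_ends) t"
proof
  let ?E = "line_graph_E (H_edges t) H_ends"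
  let ?D = "AV ` {1..t-3} \<union> {VW1, VW2}"
  assume "has_K_immersion (H_edges t) ?E t"
  then obtain \<phi> P where all: "inj_on \<phi> {..<t} \<and> \<phi> ` {..<t} \<subseteq> H_edges t \<and>
     (\<forall>i j. i < j \<and> j < t \<longrightarrow> is_path (H_edges t) ?E (P i j) \<and> hd (P i j) = \<phi> i \<and> last (P i j) = \<phi> j) \<and>
     (\<forall>i j k l. i < j \<and> j < t \<and> k < l \<and> l < t \<and> (i, j) \<noteq> (k, l) \<longrightarrow>
        path_edges (P i j) \<inter> path_edges (P k l) = {})"
    unfolding has_K_immersion_def by (elim exE)
  note inj = all[THEN conjunct1]
  note img = all[THEN conjunct2, THEN conjunct1]
  note paths = all[THEN conjunct2, THEN conjunct2, THEN conjunct1]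
  note disj = all[THEN conjunct2, THEN conjunct2, THEN conjunct2]
  have fin: "finite ?E" by (rule LG_finite[OF H_finite])
  have "\<phi> ` {..<t} \<subseteq> ?D"
  proof
    fix v assume "v \<in> \<phi> ` {..<t}"
    then obtain k where k: "k < t" "v = \<phi> k" by auto
    have lo: "t - 1 \<le> card {e\<in>?E. \<phi> k \<in> e}" by (rule imm_deg[OF fin inj paths disj k(1)])
    show "v \<in> ?D"
    proof (rule ccontr)
      assume "v \<notin> ?D"
      moreover have "v \<in> H_edges t" using img k by auto
      ultimately have "card {e\<in>?E. \<phi> k \<in> e} \<le> t - 2" using deg_bound[OF t] k by simp
      then show False using lo t by simp
    qed
  qed
  then have "card (\<phi> ` {..<t}) \<le> card ?D" by (intro card_mono) auto
  also have "\<dots> \<le> card (AV ` {1..t-3}) + card {VW1, VW2}" by (rule card_Un_le)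
  also have "\<dots> \<le> (t - 3) + 2"
  proof -
    have "card (AV ` {1..t-3}) \<le> card {1..t-3}" by (rule card_image_le) auto
    then show ?thesis by simp
  qed
  finally have "card (\<phi> ` {..<t}) \<le> t - 1" using t by simp
  moreover have "card (\<phi> ` {..<t}) = t" using card_image[OF inj] by simp
  ultimately show False using t by simp
qed



lemma has_minor:
  assumes t: "t \<ge> 5"
  shows "has_K_minor (H_edges t) (line_graph_E (H_edges t) H_ends) t"
proof -
  let ?E = "line_graph_E (H_edges t) H_ends"
  define Y where "Y = UA ` {1..t-3} \<union> {BW}"
  define f where "f = (\<lambda>z. if z \<in> Y then UB else z)"
  define V2 where "V2 = AV ` {1..t-3} \<union> {UB, VW1, VW2}"
  define E2 where "E2 = {f ` e | e. e \<in> ?E \<and> f ` e \<noteq> {UB}}"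
  have finY: "finite Y" unfolding Y_def by simp
  have UBY: "UB \<notin> Y" unfolding Y_def by auto
  have star: "\<forall>y\<in>Y. {UB, y} \<in> ?E"
  proof
    fix y assume "y \<in> Y"
    then show "{UB, y} \<in> ?E" unfolding Y_def LG_mem by (auto simp: H_edges_def)
  qed
  have two: "\<forall>e\<in>?E. \<exists>a b. a \<noteq> b \<and> e = {a,b}" using LG_elem by blast
  have V2eq: "H_edges t - Y = V2" unfolding V2_def Y_def H_edges_def by auto
  have c: "contracts (H_edges t) ?E V2 E2"
    using contracts_star[OF finY UBY star two, of "H_edges t"] unfolding V2eq E2_def f_def .
  have fmap: "f a \<in> V2" if "a \<in> H_edges t" for a
    using that unfolding f_def V2_def Y_def H_edges_def by auto
  have ffix: "f a = a" if "a \<in> V2" for a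
    using that unfolding f_def V2_def Y_def by auto
  have finV2: "finite V2" unfolding V2_def by simp
  have cardV2: "card V2 = t"
  proof -
    have "card (AV ` {1..t-3}) = t - 3" by (subst card_image) (auto simp: inj_on_def)
    moreover have "AV ` {1..t-3} \<inter> {UB, VW1, VW2} = {}" by auto
    moreover have "card {UB, VW1, VW2} = 3" by simp
    ultimately have "card V2 = t - 3 + 3" unfolding V2_def by (simp add: card_Un_disjoint)
    then show ?thesis using t by simp
  qed
  have conn: "\<exists>c. f c = UB \<and> {c, b} \<in> ?E" if bV: "b \<in> V2" "b \<noteq> UB" for b
  proof -
    consider (av) i where "b = AV i" "i \<in> {1..t-3}" | (w1) "b = VW1" | (w2) "b = VW2"
      using bV unfolding V2_def by auto
    then show ?thesis
    proof cases
      case av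
      then have "f (UA i) = UB" "{UA i, b} \<in> ?E" unfolding f_def Y_def LG_mem by (auto simp: H_edges_def)
      then show ?thesis by blast
    next
      case w1
      then have "f BW = UB" "{BW, b} \<in> ?E" unfolding f_def Y_def LG_mem by (auto simp: H_edges_def)
      then show ?thesis by blast
    next
      case w2
      then have "f BW = UB" "{BW, b} \<in> ?E" unfolding f_def Y_def LG_mem by (auto simp: H_edges_def)
      then show ?thesis by blast
    qed
  qed
  have direct: "{a, b} \<in> ?E" if "a \<in> V2" "b \<in> V2" "a \<noteq> b" "a \<noteq> UB" "b \<noteq> UB" for a b
    using that unfolding V2_def LG_mem by (auto simp: H_edges_def)
  have E2eq: "E2 = {{x, y} | x y. x \<in> V2 \<and> y \<in> V2 \<and> x \<noteq> y}"
  proof (rule set_eqI, rule iffI)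
    fix z assume "z \<in> E2"
    then obtain e where e: "e \<in> ?E" "f ` e \<noteq> {UB}" "z = f ` e" unfolding E2_def by auto
    obtain a b where ab: "e = {a,b}" "a \<in> H_edges t" "b \<in> H_edges t" "a \<noteq> b"
      using LG_elem[OF e(1)] by blast
    have z: "z = {f a, f b}" using e(3) ab(1) by simp
    have "f a \<noteq> f b"
    proof
      assume fab: "f a = f b"
      then have "f a \<noteq> UB" using e(2) z e(3) by auto
      then have "f a = a" "f b = b" using fab unfolding f_def by (auto split: if_splits)
      then show False using fab ab(4) by simp
    qed
    then show "z \<in> {{x, y} | x y. x \<in> V2 \<and> y \<in> V2 \<and> x \<noteq> y}"
      using z fmap ab by blast
  next
    fix z assume "z \<in> {{x, y} | x y. x \<in> V2 \<and> y \<in> V2 \<and> x \<noteq> y}"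
    then obtain a b where ab: "z = {a,b}" "a \<in> V2" "b \<in> V2" "a \<noteq> b" by blast
    have key: "\<exists>e\<in>?E. f ` e = {a,b}" if hh: "a \<in> V2" "b \<in> V2" "a \<noteq> b" "b \<noteq> UB" for a b
    proof (cases "a = UB")
      case True
      obtain c where "f c = UB" "{c, b} \<in> ?E" using conn hh by blast
      moreover have "f b = b" using ffix hh by blast
      ultimately show ?thesis using True by (intro bexI[of _ "{c,b}"]) auto
    next
      case False
      have "{a,b} \<in> ?E" using direct hh False by blast
      moreover have "f ` {a,b} = {a,b}" using ffix hh by simp
      ultimately show ?thesis by blast
    qed
    have "\<exists>e\<in>?E. f ` e = {a,b}"
    proof (cases "b = UB")
      case False then show ?thesis using key ab by blast
    next
      case True
      then have "a \<noteq> UB" using ab by simp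
      then obtain e where "e \<in> ?E" "f ` e = {b,a}" using key[of b a] ab by blast
      then show ?thesis by (metis insert_commute)
    qed
    then obtain e where "e \<in> ?E" "f ` e = {a,b}" by blast
    moreover have "{a,b} \<noteq> {UB}" using ab(4) by auto
    ultimately show "z \<in> E2" unfolding E2_def using ab(1) by blast
  qed
  have compl: "is_complete_on V2 E2 t"
    unfolding is_complete_on_def using finV2 cardV2 E2eq by blast
  have sub: "\<forall>e\<in>?E. e \<subseteq> H_edges t"
  proof
    fix e assume "e \<in> ?E"
    then show "e \<subseteq> H_edges t" using LG_elem by blast
  qed
  show ?thesis unfolding has_K_minor_def
    using c compl sub by blast
qed


theorem mainTheorem7:
  fixes t :: nat
  assumes "t \<ge> 5"
  shows "has_K_minor (H_edges t) (line_graph_E (H_edges t) H_ends) t \<and>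
         \<not> has_K_immersion (H_edges t) (line_graph_E (H_edges t) H_ends) t"
  using has_minor[OF assms] no_imm[OF assms] by blast

end
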